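(* Let $k\geq0$, $q\geq1$, $m\ge1$ and $\gamma=(\gamma_1,\ldots,\gamma_m)\in\mathbb{Z}^m$ with $\gamma_1\ge 2$ and $2\le\gamma_{i+1}\le\gamma_i+1$ for all $1\le i<m$. Then $F^{1234}(k,q,\gamma)=F^{2143}(k,q,\gamma)$.
   Context: For $\pi\in\{1234,2143\}$ define successor functions on integer triples. $\mathrm{suc}^{2143}(x,y,z)=\emptyset$ if $z\le0$ and for $z\ge1$, $\mathrm{suc}^{2143}(x,y,z)=\{(2,y{+}1,z),\ldots,(x{+}1,y{+}1,z)\}\cup\{(x,x{+}1,z),\ldots,(x,y,z)\}\cup\mathrm{suc}^{2143}(x,x,z{-}1)$. $\mathrm{suc}^{1234}(x,y,1)=\{(2,y{+}1,1),\ldots,(x{+}1,y{+}1,1)\}\cup\{(x,x{+}1,1),\ldots,(x,y,1)\}$ and for $z\ge2$, $\mathrm{suc}^{1234}(x,y,z)=\{(2,y{+}1,z),\ldots,(x{+}1,y{+}1,z)\}\cup\mathrm{suc}^{1234}(x,y,z{-}1)$ (sets of the form $\{(x,x{+}1,\cdot),\ldots,(x,y,\cdot)\}$ are empty if $y\le x$). A path in $\mathcal{P}^{\pi}$ is a finite sequence $P=(v_1,\ldots,v_r)$, $r\ge1$, of points of $\mathbb{Z}^3$ with $v_1=(x,y,z)$, $2\le x\le y$, $z\ge1$, and $v_{i+1}\in\mathrm{suc}^{\pi}(v_i)$; its length is $\ell(P)=r$. For $P\in\mathcal{P}^{2143}$, an edge from $(x_1,y_1,z_1)$ to $(x_2,y_2,z_2)$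 is recorded if either $z_1=z_2$ and $y_2=y_1+1$, or $z_1>z_2$. For $P\in\mathcal{P}^{1234}$, such an edge is recorded if $y_2=y_1+1$. The signature of $P$ is the tuple of the $x$-coordinate of $v_1$ followed by the $x$-coordinates of the endpoints of the recorded edges, in order. For $k\ge0$, $q\ge1$, $\gamma\in\mathbb{Z}^m$, $m\ge1$, $\mathcal{P}^{\pi}_{k,q,\gamma}$ is the set of paths in $\mathcal{P}^{\pi}$ starting at $(\gamma_1,\gamma_1+k,q)$ with signature $\gamma$, and $F^{\pi}(k,q,\gamma)=\sum_{P\in\mathcal{P}^{\pi}_{k,q,\gamma}}t^{\ell(P)-m}$, a formal power series in $t$. *)

theory Defs
  imports "HOL-Computational_Algebra.Formal_Power_Series"
begin

type_synonym pt = "int \<times> int \<times> int"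

function suc2143 :: "int \<Rightarrow> int \<Rightarrow> int \<Rightarrow> pt set" where
  "suc2143 x y z =
     (if z \<le> 0 then {}
      else {(a, y + 1, z) | a. 2 \<le> a \<and> a \<le> x + 1}
         \<union> {(x, b, z) | b. x + 1 \<le> b \<and> b \<le> y}
         \<union> suc2143 x x (z - 1))"
  by pat_completeness auto
termination by (relation "measure (\<lambda>(x, y, z). nat z)") auto

(* suc^1234 is only specified for z >= 1; we set it to {} for z <= 0 (never reached by paths). *)
function suc1234 :: "int \<Rightarrow> int \<Rightarrow> int \<Rightarrow> pt set" where
  "suc1234 x y z =
     (if z \<le> 0 then {}
      else {(a, y + 1, z) | a. 2 \<le> a \<and> a \<le> x + 1}
         \<union> (if z = 1 then {(x, b, 1) | b. x + 1 \<le> b \<and> b \<le> y}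
            else suc1234 x y (z - 1)))"
  by pat_completeness auto
termination by (relation "measure (\<lambda>(x, y, z). nat z)") auto

definition sucP2143 :: "pt \<Rightarrow> pt set" where
  "sucP2143 v = (case v of (x, y, z) \<Rightarrow> suc2143 x y z)"

definition sucP1234 :: "pt \<Rightarrow> pt set" where
  "sucP1234 v = (case v of (x, y, z) \<Rightarrow> suc1234 x y z)"

definition xc :: "pt \<Rightarrow> int" where "xc v = fst v"
definition yc :: "pt \<Rightarrow> int" where "yc v = fst (snd v)"
definition zc :: "pt \<Rightarrow> int" where "zc v = snd (snd v)"

definition is_path :: "(pt \<Rightarrow> pt set) \<Rightarrow> pt list \<Rightarrow> bool" where
  "is_path sc P \<longleftrightarrow> P \<noteq> [] \<and>
     2 \<le> xc (hd P) \<and> xc (hd P) \<le> yc (hd P) \<and> 1 \<le> zc (hd P) \<and>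
     (\<forall>i. i + 1 < length P \<longrightarrow> P ! (i + 1) \<in> sc (P ! i))"

definition recorded2143 :: "pt \<Rightarrow> pt \<Rightarrow> bool" where
  "recorded2143 v w \<longleftrightarrow>
     (zc v = zc w \<and> yc w = yc v + 1) \<or> zc v > zc w"

definition recorded1234 :: "pt \<Rightarrow> pt \<Rightarrow> bool" where
  "recorded1234 v w \<longleftrightarrow> yc w = yc v + 1"

definition signature :: "(pt \<Rightarrow> pt \<Rightarrow> bool) \<Rightarrow> pt list \<Rightarrow> int list" where
  "signature rec P =
     xc (hd P) # [xc (P ! (i + 1)). i \<leftarrow> [0..<length P - 1], rec (P ! i) (P ! (i + 1))]"

definition Fgen :: "(pt \<Rightarrow> pt set) \<Rightarrow> (pt \<Rightarrow> pt \<Rightarrow> bool) \<Rightarrow> int \<Rightarrow> int \<Rightarrow> int list \<Rightarrow> nat fps" where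
  "Fgen sc rec k q \<gamma> = Abs_fps (\<lambda>n. card {P. is_path sc P \<and>
       hd P = (\<gamma> ! 0, \<gamma> ! 0 + k, q) \<and> signature rec P = \<gamma> \<and>
       length P = n + length \<gamma>})"

definition F1234 :: "int \<Rightarrow> int \<Rightarrow> int list \<Rightarrow> nat fps" where
  "F1234 = Fgen sucP1234 recorded1234"

definition F2143 :: "int \<Rightarrow> int \<Rightarrow> int list \<Rightarrow> nat fps" where
  "F2143 = Fgen sucP2143 recorded2143"

end

theory Submission imports Defs begin

fun chain :: "(pt \<Rightarrow> pt set) \<Rightarrow> pt list \<Rightarrow> bool" where
  "chain sc [] = True"
| "chain sc [v] = True"
| "chain sc (v # w # r) = (w \<in> sc v \<and> chain sc (w # r))"

fun tsig :: "(pt \<Rightarrow> pt \<Rightarrow> bool) \<Rightarrow> pt list \<Rightarrow> int list" where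
  "tsig rc [] = []"
| "tsig rc [v] = []"
| "tsig rc (v # w # r) = (if rc v w then [xc w] else []) @ tsig rc (w # r)"

lemma chain_iff: "chain sc P \<longleftrightarrow> (\<forall>i. i + 1 < length P \<longrightarrow> P ! (i + 1) \<in> sc (P ! i))"
proof (induction sc P rule: chain.induct)
  case (3 sc v w r)
  have "(\<forall>i. i + 1 < length (v # w # r) \<longrightarrow> (v # w # r) ! (i + 1) \<in> sc ((v # w # r) ! i))
     \<longleftrightarrow> w \<in> sc v \<and> (\<forall>j. j + 1 < length (w # r) \<longrightarrow> (w # r) ! (j + 1) \<in> sc ((w # r) ! j))"
  proof
    assume H: "\<forall>i. i + 1 < length (v # w # r) \<longrightarrow> (v # w # r) ! (i + 1) \<in> sc ((v # w # r) ! i)"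
    show "w \<in> sc v \<and> (\<forall>j. j + 1 < length (w # r) \<longrightarrow> (w # r) ! (j + 1) \<in> sc ((w # r) ! j))"
    proof
      show "w \<in> sc v" using H[rule_format, of 0] by simp
      show "\<forall>j. j + 1 < length (w # r) \<longrightarrow> (w # r) ! (j + 1) \<in> sc ((w # r) ! j)"
        using H[rule_format, of "Suc j" for j] by simp
    qed
  next
    assume H: "w \<in> sc v \<and> (\<forall>j. j + 1 < length (w # r) \<longrightarrow> (w # r) ! (j + 1) \<in> sc ((w # r) ! j))"
    show "\<forall>i. i + 1 < length (v # w # r) \<longrightarrow> (v # w # r) ! (i + 1) \<in> sc ((v # w # r) ! i)"
    proof (intro allI impI)
      fix i assume "i + 1 < length (v # w # r)"
      then show "(v # w # r) ! (i + 1) \<in> sc ((v # w # r) ! i)"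
        using H by (cases i) auto
    qed
  qed
  then show ?case using 3 by simp
qed auto

lemma tsig_eq: "[xc (P ! (i + 1)). i \<leftarrow> [0..<length P - 1], rc (P ! i) (P ! (i + 1))] = tsig rc P"
proof (induction rc P rule: tsig.induct)
  case (3 rc v w r)
  have e: "length (v # w # r) - 1 = Suc (length (w # r) - 1)" by simp
  show ?case using 3 unfolding e map_upt_Suc concat.simps by (simp cong: if_cong)
qed auto


definition NN :: "(pt \<Rightarrow> pt set) \<Rightarrow> (pt \<Rightarrow> pt \<Rightarrow> bool) \<Rightarrow> pt \<Rightarrow> int list \<Rightarrow> nat \<Rightarrow> nat" where
  "NN sc rc v g len = card {P. chain sc P \<and> P \<noteq> [] \<and> hd P = v \<and> tsig rc P = g \<and> length P = len}"

lemma chain_fin: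
  assumes "\<And>u. finite (sc u)"
  shows "finite {P. chain sc P \<and> P \<noteq> [] \<and> hd P = v \<and> length P = len}"
proof (induction len arbitrary: v)
  case 0
  then show ?case by simp
next
  case (Suc len)
  have "{P. chain sc P \<and> P \<noteq> [] \<and> hd P = v \<and> length P = Suc len} \<subseteq>
     {[v]} \<union> (\<Union>w\<in>sc v. Cons v ` {P. chain sc P \<and> P \<noteq> [] \<and> hd P = w \<and> length P = len})"
  proof
    fix P assume "P \<in> {P. chain sc P \<and> P \<noteq> [] \<and> hd P = v \<and> length P = Suc len}"
    then obtain Q where P: "P = v # Q" "chain sc P" "length Q = len" by (cases P) auto
    show "P \<in> {[v]} \<union> (\<Union>w\<in>sc v. Cons v ` {P. chain sc P \<and> P \<noteq> [] \<and> hd P = w \<and> length P = len})"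
    proof (cases Q)
      case Nil then show ?thesis using P by simp
    next
      case (Cons w r)
      have w: "w \<in> sc v" and c: "chain sc Q" using P Cons by auto
      have "P \<in> Cons v ` {P. chain sc P \<and> P \<noteq> [] \<and> hd P = w \<and> length P = len}"
        using P Cons c by auto
      then show ?thesis using w by blast
    qed
  qed
  moreover have "finite ({[v]} \<union> (\<Union>w\<in>sc v. Cons v ` {P. chain sc P \<and> P \<noteq> [] \<and> hd P = w \<and> length P = len}))"
    using Suc assms by auto
  ultimately show ?case by (rule finite_subset)
qed

lemma NN_0: "NN sc rc v g 0 = 0"
  unfolding NN_def by simp

lemma NN_Suc:
  assumes fin: "\<And>u. finite (sc u)"
  shows "NN sc rc v g (Suc len) = (if len = 0 \<and> g = [] then 1 else 0) +
    (\<Sum>w\<in>sc v. if rc v w then (case g of [] \<Rightarrow> 0 | a # g' \<Rightarrow> if a = xc w then NN sc rc w g' len else 0)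
                  else NN sc rc w g len)"
proof -
  define S where "S w = {Q. chain sc Q \<and> Q \<noteq> [] \<and> hd Q = w \<and> (if rc v w then [xc w] else []) @ tsig rc Q = g \<and> length Q = len}" for w
  define B where "B = (if len = 0 \<and> g = [] then {[v]} else {})"
  have eq: "{P. chain sc P \<and> P \<noteq> [] \<and> hd P = v \<and> tsig rc P = g \<and> length P = Suc len}
      = B \<union> (\<Union>w\<in>sc v. Cons v ` S w)"
  proof
    show "{P. chain sc P \<and> P \<noteq> [] \<and> hd P = v \<and> tsig rc P = g \<and> length P = Suc len} \<subseteq> B \<union> (\<Union>w\<in>sc v. Cons v ` S w)"
    proof
      fix P assume "P \<in> {P. chain sc P \<and> P \<noteq> [] \<and> hd P = v \<and> tsig rc P = g \<and> length P = Suc len}"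
      then obtain Q where P: "P = v # Q" "chain sc P" "length Q = len" "tsig rc P = g" by (cases P) auto
      show "P \<in> B \<union> (\<Union>w\<in>sc v. Cons v ` S w)"
      proof (cases Q)
        case Nil then show ?thesis using P by (simp add: B_def)
      next
        case (Cons w r)
        have w: "w \<in> sc v" and c: "chain sc Q" using P Cons by auto
        have "P \<in> Cons v ` S w"
          using P Cons c by (auto simp: S_def)
        then show ?thesis using w by blast
      qed
    qed
  next
    show "B \<union> (\<Union>w\<in>sc v. Cons v ` S w) \<subseteq> {P. chain sc P \<and> P \<noteq> [] \<and> hd P = v \<and> tsig rc P = g \<and> length P = Suc len}"
    proof
      fix P assume "P \<in> B \<union> (\<Union>w\<in>sc v. Cons v ` S w)"
      then show "P \<in> {P. chain sc P \<and> P \<noteq> [] \<and> hd P = v \<and> tsig rc P = g \<and> length P = Suc len}"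
      proof
        assume "P \<in> B" then show ?thesis by (simp add: B_def split: if_splits)
      next
        assume "P \<in> (\<Union>w\<in>sc v. Cons v ` S w)"
        then obtain w Q where "w \<in> sc v" "Q \<in> S w" "P = v # Q" by auto
        then show ?thesis by (cases Q) (auto simp: S_def)
      qed
    qed
  qed
  have finS: "finite (S w)" for w
    by (rule finite_subset[OF _ chain_fin[OF fin, where v=w and len=len]]) (auto simp: S_def)
  have disj: "B \<inter> (\<Union>w\<in>sc v. Cons v ` S w) = {}"
    by (auto simp: B_def S_def)
  have cardU: "card (\<Union>w\<in>sc v. Cons v ` S w) = (\<Sum>w\<in>sc v. card (S w))"
  proof -
    have "card (\<Union>w\<in>sc v. Cons v ` S w) = (\<Sum>w\<in>sc v. card (Cons v ` S w))"
      by (rule card_UN_disjoint) (use fin finS in \<open>auto simp: S_def\<close>)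
    also have "\<dots> = (\<Sum>w\<in>sc v. card (S w))"
      by (intro sum.cong refl card_image) (auto simp: inj_on_def)
    finally show ?thesis .
  qed
  have cardS: "card (S w) = (if rc v w then (case g of [] \<Rightarrow> 0 | a # g' \<Rightarrow> if a = xc w then NN sc rc w g' len else 0)
                  else NN sc rc w g len)" for w
  proof (cases "rc v w")
    case True
    then show ?thesis
    proof (cases g)
      case Nil then show ?thesis using True by (simp add: S_def)
    next
      case (Cons a g')
      then show ?thesis using True by (auto simp: S_def NN_def)
    qed
  next
    case False then show ?thesis by (simp add: S_def NN_def)
  qed
  have "NN sc rc v g (Suc len) = card (B \<union> (\<Union>w\<in>sc v. Cons v ` S w))"
    unfolding NN_def eq ..
  also have "\<dots> = card B + card (\<Union>w\<in>sc v. Cons v ` S w)"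
    by (rule card_Un_disjoint) (use finS fin disj in \<open>auto simp: B_def\<close>)
  finally show ?thesis unfolding cardU cardS by (simp add: B_def)
qed


lemma Fgen_NN:
  assumes "k \<ge> 0" "q \<ge> 1" "\<gamma> \<noteq> []" "\<gamma> ! 0 \<ge> 2"
  shows "Fgen sc rc k q \<gamma> = Abs_fps (\<lambda>n. NN sc rc (\<gamma> ! 0, \<gamma> ! 0 + k, q) (tl \<gamma>) (n + length \<gamma>))"
proof -
  have hg: "\<gamma> = \<gamma> ! 0 # tl \<gamma>" using assms(3) by (cases \<gamma>) auto
  have "{P. is_path sc P \<and> hd P = (\<gamma> ! 0, \<gamma> ! 0 + k, q) \<and> signature rc P = \<gamma> \<and> length P = L}
      = {P. chain sc P \<and> P \<noteq> [] \<and> hd P = (\<gamma> ! 0, \<gamma> ! 0 + k, q) \<and> tsig rc P = tl \<gamma> \<and> length P = L}" for L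
  proof (intro Collect_cong iffI)
    fix P assume "is_path sc P \<and> hd P = (\<gamma> ! 0, \<gamma> ! 0 + k, q) \<and> signature rc P = \<gamma> \<and> length P = L"
    then show "chain sc P \<and> P \<noteq> [] \<and> hd P = (\<gamma> ! 0, \<gamma> ! 0 + k, q) \<and> tsig rc P = tl \<gamma> \<and> length P = L"
      unfolding is_path_def signature_def tsig_eq chain_iff[symmetric] by (subst (asm) (2) hg) auto
  next
    fix P assume "chain sc P \<and> P \<noteq> [] \<and> hd P = (\<gamma> ! 0, \<gamma> ! 0 + k, q) \<and> tsig rc P = tl \<gamma> \<and> length P = L"
    then show "is_path sc P \<and> hd P = (\<gamma> ! 0, \<gamma> ! 0 + k, q) \<and> signature rc P = \<gamma> \<and> length P = L"
      unfolding is_path_def signature_def tsig_eq chain_iff[symmetric] using assms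
      by (subst (2) hg) (auto simp: xc_def yc_def zc_def)
  qed
  then show ?thesis unfolding Fgen_def NN_def by simp
qed

declare suc1234.simps[simp del] suc2143.simps[simp del]

lemma suc1234_char:
  assumes "z \<ge> 1"
  shows "suc1234 x y z = (\<lambda>(a, z'). (a, y + 1, z')) ` ({2..x+1} \<times> {1..z}) \<union> (\<lambda>b. (x, b, 1)) ` {x+1..y}"
proof -
  obtain n where n: "z = 1 + int n" using assms by (metis add.commute le_add_diff_inverse zle_iff_zadd)
  have "suc1234 x y (1 + int n) = (\<lambda>(a, z'). (a, y + 1, z')) ` ({2..x+1} \<times> {1..1 + int n}) \<union> (\<lambda>b. (x, b, 1)) ` {x+1..y}"
  proof (induction n)
    case 0
    show ?case by (subst suc1234.simps) auto
  next
    case (Suc n)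
    have "suc1234 x y (1 + int (Suc n)) = {(a, y + 1, 1 + int (Suc n)) | a. 2 \<le> a \<and> a \<le> x + 1} \<union> suc1234 x y (1 + int n)"
      by (subst suc1234.simps) simp
    also have "\<dots> = (\<lambda>(a, z'). (a, y + 1, z')) ` ({2..x+1} \<times> {1..1 + int (Suc n)}) \<union> (\<lambda>b. (x, b, 1)) ` {x+1..y}"
      unfolding Suc.IH by (auto simp: image_iff)
    finally show ?case .
  qed
  then show ?thesis using n by simp
qed

lemma suc2143_diag:
  assumes "z \<ge> 0"
  shows "suc2143 x x z = (\<lambda>(a, z'). (a, x + 1, z')) ` ({2..x+1} \<times> {1..z})"
proof -
  obtain n where n: "z = int n" using assms by (metis nonneg_int_cases)
  have "suc2143 x x (int n) = (\<lambda>(a, z'). (a, x + 1, z')) ` ({2..x+1} \<times> {1..int n})"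
  proof (induction n)
    case 0
    show ?case by (subst suc2143.simps) auto
  next
    case (Suc n)
    have "suc2143 x x (int (Suc n)) = {(a, x + 1, int (Suc n)) | a. 2 \<le> a \<and> a \<le> x + 1} \<union> suc2143 x x (int n)"
      by (subst suc2143.simps) auto
    also have "\<dots> = (\<lambda>(a, z'). (a, x + 1, z')) ` ({2..x+1} \<times> {1..int (Suc n)})"
      unfolding Suc.IH by (auto simp: image_iff)
    finally show ?case .
  qed
  then show ?thesis using n by simp
qed

lemma suc2143_char:
  assumes "z \<ge> 1"
  shows "suc2143 x y z = (\<lambda>a. (a, y + 1, z)) ` {2..x+1} \<union> (\<lambda>b. (x, b, z)) ` {x+1..y}
     \<union> (\<lambda>(a, z'). (a, x + 1, z')) ` ({2..x+1} \<times> {1..z-1})"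
proof -
  have "suc2143 x y z = {(a, y + 1, z) | a. 2 \<le> a \<and> a \<le> x + 1} \<union> {(x, b, z) | b. x + 1 \<le> b \<and> b \<le> y}
         \<union> suc2143 x x (z - 1)"
    using assms by (subst suc2143.simps) simp
  then show ?thesis using assms by (simp add: suc2143_diag) (auto simp: image_iff)
qed

lemma fin1234: "finite (sucP1234 u)"
proof -
  obtain x y z where u: "u = (x, y, z)" by (cases u)
  show ?thesis
  proof (cases "z \<ge> 1")
    case True then show ?thesis by (simp add: u sucP1234_def suc1234_char)
  next
    case False then show ?thesis by (simp add: u sucP1234_def suc1234.simps[of x y z])
  qed
qed

lemma fin2143: "finite (sucP2143 u)"
proof -
  obtain x y z where u: "u = (x, y, z)" by (cases u)
  show ?thesis
  proof (cases "z \<ge> 1")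
    case True then show ?thesis by (simp add: u sucP2143_def suc2143_char)
  next
    case False then show ?thesis by (simp add: u sucP2143_def suc2143.simps[of x y z])
  qed
qed


abbreviation "N1 \<equiv> NN sucP1234 recorded1234"
abbreviation "N2 \<equiv> NN sucP2143 recorded2143"

lemma R1:
  assumes z: "z \<ge> 1"
  shows "N1 (x, y, z) g (Suc len) = (if len = 0 \<and> g = [] then 1 else 0)
     + (case g of [] \<Rightarrow> 0 | a # g' \<Rightarrow> if 2 \<le> a \<and> a \<le> x + 1 then (\<Sum>z'\<in>{1..z}. N1 (a, y + 1, z') g' len) else 0)
     + (\<Sum>b\<in>{x+1..y}. N1 (x, b, 1) g len)"
proof -
  define M where "M w = (if recorded1234 (x, y, z) w then (case g of [] \<Rightarrow> 0 | a # g' \<Rightarrow> if a = xc w then N1 w g' len else 0)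
                  else N1 w g len)" for w
  define f :: "int \<times> int \<Rightarrow> pt" where "f = (\<lambda>(a, z'). (a, y + 1, z'))"
  define h :: "int \<Rightarrow> pt" where "h = (\<lambda>b. (x, b, 1::int))"
  have S: "sucP1234 (x, y, z) = f ` ({2..x+1} \<times> {1..z}) \<union> h ` {x+1..y}"
    using z by (simp add: sucP1234_def suc1234_char f_def h_def)
  have disj: "f ` ({2..x+1} \<times> {1..z}) \<inter> h ` {x+1..y} = {}"
    by (auto simp: f_def h_def)
  have injf: "inj_on f A" for A by (auto simp: inj_on_def f_def)
  have injh: "inj_on h A" for A by (auto simp: inj_on_def h_def)
  have sA: "(\<Sum>w\<in>f ` ({2..x+1} \<times> {1..z}). M w) =
      (case g of [] \<Rightarrow> 0 | a # g' \<Rightarrow> if 2 \<le> a \<and> a \<le> x + 1 then (\<Sum>z'\<in>{1..z}. N1 (a, y + 1, z') g' len) else 0)"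
  proof -
    have "(\<Sum>w\<in>f ` ({2..x+1} \<times> {1..z}). M w) = (\<Sum>p\<in>{2..x+1} \<times> {1..z}. M (f p))"
      by (simp add: sum.reindex[OF injf])
    also have "\<dots> = (\<Sum>a'\<in>{2..x+1}. \<Sum>z'\<in>{1..z}. M (a', y + 1, z'))"
      unfolding sum.cartesian_product f_def by (intro sum.cong refl) (auto split: prod.splits)
    also have "\<dots> = (case g of [] \<Rightarrow> 0 | a # g' \<Rightarrow> if 2 \<le> a \<and> a \<le> x + 1 then (\<Sum>z'\<in>{1..z}. N1 (a, y + 1, z') g' len) else 0)"
    proof (cases g)
      case Nil then show ?thesis by (simp add: M_def recorded1234_def yc_def)
    next
      case (Cons a g')
      have "(\<Sum>a'\<in>{2..x+1}. \<Sum>z'\<in>{1..z}. M (a', y + 1, z')) =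
            (\<Sum>a'\<in>{2..x+1}. if a = a' then (\<Sum>z'\<in>{1..z}. N1 (a', y + 1, z') g' len) else 0)"
        by (intro sum.cong refl) (simp add: M_def recorded1234_def yc_def xc_def Cons)
      also have "\<dots> = (if 2 \<le> a \<and> a \<le> x + 1 then (\<Sum>z'\<in>{1..z}. N1 (a, y + 1, z') g' len) else 0)"
        by (subst sum.delta') auto
      finally show ?thesis using Cons by simp
    qed
    finally show ?thesis .
  qed
  have sB: "(\<Sum>w\<in>h ` {x+1..y}. M w) = (\<Sum>b\<in>{x+1..y}. N1 (x, b, 1) g len)"
    by (simp add: sum.reindex[OF injh]) (intro sum.cong refl, simp add: M_def h_def recorded1234_def yc_def)
  have "N1 (x, y, z) g (Suc len) = (if len = 0 \<and> g = [] then 1 else 0) + (\<Sum>w\<in>sucP1234 (x, y, z). M w)"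
    unfolding M_def by (rule NN_Suc[OF fin1234])
  also have "(\<Sum>w\<in>sucP1234 (x, y, z). M w) = (\<Sum>w\<in>f ` ({2..x+1} \<times> {1..z}). M w) + (\<Sum>w\<in>h ` {x+1..y}. M w)"
    unfolding S by (rule sum.union_disjoint) (auto simp: disj)
  finally show ?thesis unfolding sA sB by simp
qed

lemma R2:
  assumes z: "z \<ge> 1"
  shows "N2 (x, y, z) g (Suc len) = (if len = 0 \<and> g = [] then 1 else 0)
     + (case g of [] \<Rightarrow> 0 | a # g' \<Rightarrow> if 2 \<le> a \<and> a \<le> x + 1 then
          N2 (a, y + 1, z) g' len + (\<Sum>z'\<in>{1..z-1}. N2 (a, x + 1, z') g' len) else 0)
     + (\<Sum>b\<in>{x+1..y}. N2 (x, b, z) g len)"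
proof -
  define M where "M w = (if recorded2143 (x, y, z) w then (case g of [] \<Rightarrow> 0 | a # g' \<Rightarrow> if a = xc w then N2 w g' len else 0)
                  else N2 w g len)" for w
  define e :: "int \<Rightarrow> pt" where "e = (\<lambda>a. (a, y + 1, z))"
  define f :: "int \<times> int \<Rightarrow> pt" where "f = (\<lambda>(a, z'). (a, x + 1, z'))"
  define h :: "int \<Rightarrow> pt" where "h = (\<lambda>b. (x, b, z))"
  have S: "sucP2143 (x, y, z) = e ` {2..x+1} \<union> h ` {x+1..y} \<union> f ` ({2..x+1} \<times> {1..z-1})"
    using z by (simp add: sucP2143_def suc2143_char f_def h_def e_def)
  have disj1: "e ` {2..x+1} \<inter> h ` {x+1..y} = {}"
    by (auto simp: e_def h_def)
  have disj2: "(e ` {2..x+1} \<union> h ` {x+1..y}) \<inter> f ` ({2..x+1} \<times> {1..z-1}) = {}"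
    by (auto simp: e_def h_def f_def)
  have injf: "inj_on f A" for A by (auto simp: inj_on_def f_def)
  have injh: "inj_on h A" for A by (auto simp: inj_on_def h_def)
  have inje: "inj_on e A" for A by (auto simp: inj_on_def e_def)
  have sA: "(\<Sum>w\<in>f ` ({2..x+1} \<times> {1..z-1}). M w) =
      (case g of [] \<Rightarrow> 0 | a # g' \<Rightarrow> if 2 \<le> a \<and> a \<le> x + 1 then (\<Sum>z'\<in>{1..z-1}. N2 (a, x + 1, z') g' len) else 0)"
  proof -
    have "(\<Sum>w\<in>f ` ({2..x+1} \<times> {1..z-1}). M w) = (\<Sum>p\<in>{2..x+1} \<times> {1..z-1}. M (f p))"
      by (simp add: sum.reindex[OF injf])
    also have "\<dots> = (\<Sum>a'\<in>{2..x+1}. \<Sum>z'\<in>{1..z-1}. M (a', x + 1, z'))"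
      unfolding sum.cartesian_product f_def by (intro sum.cong refl) (auto split: prod.splits)
    also have "\<dots> = (case g of [] \<Rightarrow> 0 | a # g' \<Rightarrow> if 2 \<le> a \<and> a \<le> x + 1 then (\<Sum>z'\<in>{1..z-1}. N2 (a, x + 1, z') g' len) else 0)"
    proof (cases g)
      case Nil then show ?thesis by (auto simp: M_def recorded2143_def zc_def intro!: sum.neutral)
    next
      case (Cons a g')
      have "(\<Sum>a'\<in>{2..x+1}. \<Sum>z'\<in>{1..z-1}. M (a', x + 1, z')) =
            (\<Sum>a'\<in>{2..x+1}. if a = a' then (\<Sum>z'\<in>{1..z-1}. N2 (a', x + 1, z') g' len) else 0)"
        by (intro sum.cong refl) (auto simp: M_def recorded2143_def zc_def xc_def Cons)
      also have "\<dots> = (if 2 \<le> a \<and> a \<le> x + 1 then (\<Sum>z'\<in>{1..z-1}. N2 (a, x + 1, z') g' len) else 0)"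
        by (subst sum.delta') auto
      finally show ?thesis using Cons by simp
    qed
    finally show ?thesis .
  qed
  have sE: "(\<Sum>w\<in>e ` {2..x+1}. M w) =
      (case g of [] \<Rightarrow> 0 | a # g' \<Rightarrow> if 2 \<le> a \<and> a \<le> x + 1 then N2 (a, y + 1, z) g' len else 0)"
  proof -
    have "(\<Sum>w\<in>e ` {2..x+1}. M w) = (\<Sum>a'\<in>{2..x+1}. M (a', y + 1, z))"
      by (simp add: sum.reindex[OF inje]) (simp add: e_def)
    also have "\<dots> = (case g of [] \<Rightarrow> 0 | a # g' \<Rightarrow> if 2 \<le> a \<and> a \<le> x + 1 then N2 (a, y + 1, z) g' len else 0)"
    proof (cases g)
      case Nil then show ?thesis by (simp add: M_def recorded2143_def zc_def yc_def)
    next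
      case (Cons a g')
      have "(\<Sum>a'\<in>{2..x+1}. M (a', y + 1, z)) =
            (\<Sum>a'\<in>{2..x+1}. if a = a' then N2 (a', y + 1, z) g' len else 0)"
        by (intro sum.cong refl) (auto simp: M_def recorded2143_def zc_def yc_def xc_def Cons)
      also have "\<dots> = (if 2 \<le> a \<and> a \<le> x + 1 then N2 (a, y + 1, z) g' len else 0)"
        by (subst sum.delta') auto
      finally show ?thesis using Cons by simp
    qed
    finally show ?thesis .
  qed
  have sB: "(\<Sum>w\<in>h ` {x+1..y}. M w) = (\<Sum>b\<in>{x+1..y}. N2 (x, b, z) g len)"
    by (simp add: sum.reindex[OF injh]) (intro sum.cong refl, auto simp: M_def h_def recorded2143_def yc_def zc_def)
  have "N2 (x, y, z) g (Suc len) = (if len = 0 \<and> g = [] then 1 else 0) + (\<Sum>w\<in>sucP2143 (x, y, z). M w)"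
    unfolding M_def by (rule NN_Suc[OF fin2143])
  also have "(\<Sum>w\<in>sucP2143 (x, y, z). M w) = (\<Sum>w\<in>e ` {2..x+1} \<union> h ` {x+1..y}. M w) + (\<Sum>w\<in>f ` ({2..x+1} \<times> {1..z-1}). M w)"
    unfolding S by (rule sum.union_disjoint) (auto simp: disj2)
  also have "(\<Sum>w\<in>e ` {2..x+1} \<union> h ` {x+1..y}. M w) = (\<Sum>w\<in>e ` {2..x+1}. M w) + (\<Sum>w\<in>h ` {x+1..y}. M w)"
    by (rule sum.union_disjoint) (auto simp: disj1)
  finally show ?thesis unfolding sA sB sE by (cases g) auto
qed


lemma sum_top: "(a::int) \<le> y \<Longrightarrow> sum f {a..y} = sum f {a..y-1} + f y"
proof -
  assume "a \<le> y"
  then have "{a..y} = insert y {a..y-1}" by auto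
  then show ?thesis by (simp add: add.commute)
qed

lemma sum_bot: "(a::int) \<le> y \<Longrightarrow> sum f {a..y} = f a + sum f {a+1..y}"
proof -
  assume "a \<le> y"
  then have "{a..y} = insert a {a+1..y}" by auto
  then show ?thesis by simp
qed

lemma sum_shift: "(z::int) \<ge> 0 \<Longrightarrow> F 1 + (\<Sum>z'\<in>{1..z}. F (z' + 1)) = (\<Sum>z'\<in>{1..z+1}. F z')"
proof -
  assume z: "z \<ge> 0"
  have "sum F {1..z+1} = F 1 + sum F {1+1..z+1}" using z by (intro sum_bot) simp
  also have "{1+1..z+1} = (\<lambda>z'. z' + 1) ` {1..z}" by (simp only: image_add_atLeastAtMost')
  also have "sum F ((\<lambda>z'. z' + 1) ` {1..z}) = sum (F \<circ> (\<lambda>z'. z' + 1)) {1..z}"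
    by (rule sum.reindex) (simp add: inj_on_def)
  finally show ?thesis by (simp add: comp_def)
qed

lemma zindep:
  assumes "z \<ge> 1" "g = [] \<or> (\<exists>a g'. g = a # g' \<and> \<not> (2 \<le> a \<and> a \<le> x + 1))"
  shows "N1 (x, y, z) g len = N1 (x, y, 1) g len"
proof (cases len)
  case 0 then show ?thesis by (simp add: NN_0)
next
  case (Suc l)
  have c1: "(case g of [] \<Rightarrow> 0 | a # g' \<Rightarrow> if 2 \<le> a \<and> a \<le> x + 1 then (\<Sum>z'\<in>{1..z}. N1 (a, y + 1, z') g' l) else 0) = 0"
    using assms(2) by (cases g) auto
  have c2: "(case g of [] \<Rightarrow> 0 | a # g' \<Rightarrow> if 2 \<le> a \<and> a \<le> x + 1 then (\<Sum>z'\<in>{1..1}. N1 (a, y + 1, z') g' l) else 0) = 0"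
    using assms(2) by (cases g) auto
  show ?thesis unfolding Suc R1[OF assms(1)] R1[where z=1, simplified] c1 c2 by simp
qed

lemma lemA:
  "x < y \<Longrightarrow> z \<ge> 1 \<Longrightarrow> N1 (x, y, z) g (Suc len) = N1 (x, y - 1, z) g (Suc len) + N1 (x, y, z + 1) g len"
proof (induction g arbitrary: x y z len)
  case Nil
  let ?G = "\<lambda>b. N1 (x, b, 1) [] len"
  have s: "(\<Sum>b\<in>{x+1..y}. ?G b) = (\<Sum>b\<in>{x+1..y-1}. ?G b) + ?G y" using Nil by (intro sum_top) simp
  have zi: "N1 (x, y, z + 1) [] len = ?G y" using Nil by (intro zindep) auto
  have "N1 (x, y, z) [] (Suc len) = (if len = 0 then 1 else 0) + (\<Sum>b\<in>{x+1..y}. ?G b)" using Nil R1[where x=x and y=y and z=z and g="[]" and len=len] by simp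
  moreover have "N1 (x, y - 1, z) [] (Suc len) = (if len = 0 then 1 else 0) + (\<Sum>b\<in>{x+1..y-1}. ?G b)" using Nil R1[where x=x and y="y-1" and z=z and g="[]" and len=len] by simp
  ultimately show ?case using s zi by simp
next
  case (Cons a g')
  show ?case
  proof (cases len)
    case 0 then show ?thesis using Cons.prems R1[where x=x and y=y and z=z and g="a#g'" and len=0] R1[where x=x and y="y-1" and z=z and g="a#g'" and len=0] by (simp add: NN_0)
  next
    case (Suc l)
    show ?thesis
    proof (cases "2 \<le> a \<and> a \<le> x + 1")
      case False
      let ?G = "\<lambda>b. N1 (x, b, 1) (a # g') (Suc l)"
      have s: "(\<Sum>b\<in>{x+1..y}. ?G b) = (\<Sum>b\<in>{x+1..y-1}. ?G b) + ?G y" using Cons.prems by (intro sum_top) simp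
      have zi: "N1 (x, y, z + 1) (a # g') (Suc l) = ?G y" using Cons.prems False by (intro zindep) auto
      have "N1 (x, y, z) (a # g') (Suc (Suc l)) = (\<Sum>b\<in>{x+1..y}. ?G b)" using Cons.prems False R1[where x=x and y=y and z=z and g="a#g'" and len="Suc l"] by (simp only: list.case if_not_P[OF False]) simp
      moreover have "N1 (x, y - 1, z) (a # g') (Suc (Suc l)) = (\<Sum>b\<in>{x+1..y-1}. ?G b)" using Cons.prems False R1[where x=x and y="y-1" and z=z and g="a#g'" and len="Suc l"] by (simp only: list.case if_not_P[OF False]) simp
      ultimately show ?thesis using s zi unfolding Suc by simp
    next
      case True
      let ?F = "\<lambda>z'. N1 (a, y + 1, z') g' l"
      have ih: "N1 (a, y + 1, z') g' (Suc l) = N1 (a, y, z') g' (Suc l) + ?F (z' + 1)" if "z' \<in> {1..z}" for z'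
        using Cons.IH[of a "y + 1" z' l] that True Cons.prems by simp
      have e1: "(\<Sum>z'\<in>{1..z}. N1 (a, y + 1, z') g' (Suc l)) = (\<Sum>z'\<in>{1..z}. N1 (a, y, z') g' (Suc l)) + (\<Sum>z'\<in>{1..z}. ?F (z' + 1))"
        by (simp add: ih sum.distrib)
      have e2: "N1 (x, y, 1) (a # g') (Suc l) = ?F 1 + (\<Sum>b\<in>{x+1..y}. N1 (x, b, 1) (a # g') l)"
        using True R1[where x=x and y=y and z=1 and g="a#g'" and len=l] by simp
      have e3: "N1 (x, y, z + 1) (a # g') (Suc l) = (\<Sum>z'\<in>{1..z+1}. ?F z') + (\<Sum>b\<in>{x+1..y}. N1 (x, b, 1) (a # g') l)"
        using True Cons.prems R1[where x=x and y=y and z="z+1" and g="a#g'" and len=l] by simp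
      have e4: "?F 1 + (\<Sum>z'\<in>{1..z}. ?F (z' + 1)) = (\<Sum>z'\<in>{1..z+1}. ?F z')"
        using Cons.prems by (intro sum_shift) auto
      have "N1 (x, y, z) (a # g') (Suc (Suc l)) = (\<Sum>z'\<in>{1..z}. N1 (a, y + 1, z') g' (Suc l)) + (\<Sum>b\<in>{x+1..y}. N1 (x, b, 1) (a # g') (Suc l))"
        using True Cons.prems R1[where x=x and y=y and z=z and g="a#g'" and len="Suc l"] by simp
      moreover have "N1 (x, y - 1, z) (a # g') (Suc (Suc l)) = (\<Sum>z'\<in>{1..z}. N1 (a, y, z') g' (Suc l)) + (\<Sum>b\<in>{x+1..y-1}. N1 (x, b, 1) (a # g') (Suc l))"
        using True Cons.prems R1[where x=x and y="y-1" and z=z and g="a#g'" and len="Suc l"] by simp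
      moreover have "(\<Sum>b\<in>{x+1..y}. N1 (x, b, 1) (a # g') (Suc l)) = (\<Sum>b\<in>{x+1..y-1}. N1 (x, b, 1) (a # g') (Suc l)) + N1 (x, y, 1) (a # g') (Suc l)"
        using Cons.prems by (intro sum_top) simp
      ultimately show ?thesis unfolding Suc e1 e2 e3 e4[symmetric] by simp
    qed
  qed
qed


lemma lemB:
  assumes a: "2 \<le> a" "a \<le> x + 1" and z: "z \<ge> 1"
  shows "y = x + int k \<Longrightarrow> (\<Sum>b\<in>{x+1..y}. N1 (x, b, z) (a # g') len) + (\<Sum>z'\<in>{1..z-1}. N1 (a, x + 1, z') g' len)
       = (\<Sum>b\<in>{x+1..y}. N1 (x, b, 1) (a # g') len) + (\<Sum>z'\<in>{1..z-1}. N1 (a, y + 1, z') g' len)"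
proof (induction k arbitrary: y)
  case 0
  then show ?case by simp
next
  case (Suc k)
  have IH: "(\<Sum>b\<in>{x+1..y-1}. N1 (x, b, z) (a # g') len) + (\<Sum>z'\<in>{1..z-1}. N1 (a, x + 1, z') g' len)
       = (\<Sum>b\<in>{x+1..y-1}. N1 (x, b, 1) (a # g') len) + (\<Sum>z'\<in>{1..z-1}. N1 (a, y, z') g' len)"
  proof -
    have yk: "y - 1 = x + int k" using Suc.prems by simp
    have yy: "y - 1 + 1 = y" by simp
    show ?thesis using Suc.IH[OF yk] unfolding yy .
  qed
  have xy: "x + 1 \<le> y" using Suc.prems by simp
  have t1: "(\<Sum>b\<in>{x+1..y}. N1 (x, b, z) (a # g') len) = (\<Sum>b\<in>{x+1..y-1}. N1 (x, b, z) (a # g') len) + N1 (x, y, z) (a # g') len"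
    using xy by (rule sum_top)
  have t2: "(\<Sum>b\<in>{x+1..y}. N1 (x, b, 1) (a # g') len) = (\<Sum>b\<in>{x+1..y-1}. N1 (x, b, 1) (a # g') len) + N1 (x, y, 1) (a # g') len"
    using xy by (rule sum_top)
  show ?case
  proof (cases len)
    case 0
    then show ?thesis by (simp add: NN_0)
  next
    case (Suc l)
    let ?F = "\<lambda>z'. N1 (a, y + 1, z') g' l"
    let ?SB = "\<Sum>b\<in>{x+1..y}. N1 (x, b, 1) (a # g') l"
    have h1: "N1 (x, y, z) (a # g') (Suc l) = (\<Sum>z'\<in>{1..z}. ?F z') + ?SB"
      using a z R1[where x=x and y=y and z=z and g="a#g'" and len=l] by simp
    have h2: "N1 (x, y, 1) (a # g') (Suc l) = ?F 1 + ?SB"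
      using a R1[where x=x and y=y and z=1 and g="a#g'" and len=l] by simp
    have h3: "N1 (a, y + 1, z') g' (Suc l) = N1 (a, y, z') g' (Suc l) + ?F (z' + 1)" if "z' \<in> {1..z-1}" for z'
      using lemA[of a "y + 1" z' g' l] that a xy by simp
    have h4: "(\<Sum>z'\<in>{1..z-1}. N1 (a, y + 1, z') g' (Suc l)) = (\<Sum>z'\<in>{1..z-1}. N1 (a, y, z') g' (Suc l)) + (\<Sum>z'\<in>{1..z-1}. ?F (z' + 1))"
      by (simp add: h3 sum.distrib)
    have h5: "?F 1 + (\<Sum>z'\<in>{1..z-1}. ?F (z' + 1)) = (\<Sum>z'\<in>{1..z-1+1}. ?F z')"
      using z by (intro sum_shift) simp
    have h6: "z - 1 + 1 = z" by simp
    show ?thesis using IH h5 unfolding t1 t2 unfolding Suc h1 h2 h4 h6 by linarith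
  qed
qed

lemma main: "x \<le> y \<Longrightarrow> z \<ge> 1 \<Longrightarrow> N1 (x, y, z) g len = N2 (x, y, z) g len"
proof (induction len arbitrary: x y z g)
  case 0
  then show ?case by (simp add: NN_0)
next
  case (Suc len)
  have nr: "(\<Sum>b\<in>{x+1..y}. N2 (x, b, z) g len) = (\<Sum>b\<in>{x+1..y}. N1 (x, b, z) g len)"
    using Suc.IH Suc.prems by (intro sum.cong refl) simp
  show ?case
  proof (cases "g = [] \<or> (\<exists>a g'. g = a # g' \<and> \<not> (2 \<le> a \<and> a \<le> x + 1))")
    case True
    have zi: "(\<Sum>b\<in>{x+1..y}. N1 (x, b, z) g len) = (\<Sum>b\<in>{x+1..y}. N1 (x, b, 1) g len)"
      using True Suc.prems by (intro sum.cong refl zindep) auto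
    have c1: "(case g of [] \<Rightarrow> 0 | a # g' \<Rightarrow> if 2 \<le> a \<and> a \<le> x + 1 then (\<Sum>z'\<in>{1..z}. N1 (a, y + 1, z') g' len) else 0) = 0"
      using True by (cases g) auto
    have c2: "(case g of [] \<Rightarrow> 0 | a # g' \<Rightarrow> if 2 \<le> a \<and> a \<le> x + 1 then
          N2 (a, y + 1, z) g' len + (\<Sum>z'\<in>{1..z-1}. N2 (a, x + 1, z') g' len) else 0) = 0"
      using True by (cases g) auto
    show ?thesis unfolding R1[OF Suc.prems(2)] R2[OF Suc.prems(2)] c1 c2 nr zi ..
  next
    case False
    then obtain a g' where g: "g = a # g'" and a: "2 \<le> a" "a \<le> x + 1" by (cases g) auto
    have i1: "N2 (a, y + 1, z) g' len = N1 (a, y + 1, z) g' len"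
      using Suc.IH[of a "y + 1" z g'] Suc.prems a by simp
    have i2: "(\<Sum>z'\<in>{1..z-1}. N2 (a, x + 1, z') g' len) = (\<Sum>z'\<in>{1..z-1}. N1 (a, x + 1, z') g' len)"
      using Suc.IH a by (intro sum.cong refl) simp
    obtain k where k: "y = x + int k" using Suc.prems by (metis le_iff_add nat_le_iff_add zle_iff_zadd)
    have B: "(\<Sum>b\<in>{x+1..y}. N1 (x, b, z) (a # g') len) + (\<Sum>z'\<in>{1..z-1}. N1 (a, x + 1, z') g' len)
       = (\<Sum>b\<in>{x+1..y}. N1 (x, b, 1) (a # g') len) + (\<Sum>z'\<in>{1..z-1}. N1 (a, y + 1, z') g' len)"
      using lemB[OF a Suc.prems(2) k] .
    have T: "(\<Sum>z'\<in>{1..z}. N1 (a, y + 1, z') g' len) = (\<Sum>z'\<in>{1..z-1}. N1 (a, y + 1, z') g' len) + N1 (a, y + 1, z) g' len"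
      using Suc.prems(2) by (rule sum_top)
    have e1: "N1 (x, y, z) g (Suc len) = (\<Sum>z'\<in>{1..z}. N1 (a, y + 1, z') g' len) + (\<Sum>b\<in>{x+1..y}. N1 (x, b, 1) g len)"
      using a R1[OF Suc.prems(2), of x y g len] unfolding g by simp
    have e2: "N2 (x, y, z) g (Suc len) = N2 (a, y + 1, z) g' len + (\<Sum>z'\<in>{1..z-1}. N2 (a, x + 1, z') g' len) + (\<Sum>b\<in>{x+1..y}. N2 (x, b, z) g len)"
      using a R2[OF Suc.prems(2), of x y g len] unfolding g by simp
    show ?thesis unfolding e1 e2 i1 i2 nr T using B unfolding g by linarith
  qed
qed

theorem lemma3p6:
  fixes k q :: int and \<gamma> :: "int list"
  assumes "k \<ge> 0" and "q \<ge> 1" and "length \<gamma> \<ge> 1"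
    and "\<gamma> ! 0 \<ge> 2"
    and "\<forall>i. i + 1 < length \<gamma> \<longrightarrow> 2 \<le> \<gamma> ! (i + 1) \<and> \<gamma> ! (i + 1) \<le> \<gamma> ! i + 1"
  shows "F1234 k q \<gamma> = F2143 k q \<gamma>"
proof -
  have ne: "\<gamma> \<noteq> []" using assms(3) by auto
  show ?thesis
    unfolding F1234_def F2143_def Fgen_NN[OF assms(1) assms(2) ne assms(4)]
    using main[of "\<gamma> ! 0" "\<gamma> ! 0 + k" q] assms by simp
qed

end
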